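(* Let $R>0$ and, for $d\ge0$, $r\ge0$, $$f(d,r)=\begin{cases}2r/R^2,&r\le R-d,\\0,&r>R+d\text{ or }r<d-R,\\\frac{2r}{\pi R^2}\arccos\Big(\frac{d^2+r^2-R^2}{2dr}\Big),&\text{otherwise.}\end{cases}$$ Then for any $d\ge0$ the function $f(d,\cdot)$ is concave on its support intersected with $[R,\infty)$. If in addition $d\ge R$, then $f(d,\cdot)$ is concave on its full support $[d-R,d+R]$.
   Context: $f(d,r)$ is the derivative in $r$ of $|B_r(0)\cap B_R(\mathbf{y})|/(\pi R^2)$ for $|\mathbf{y}|=d$ (the one-particle profile). *)

theory Defs
  imports "HOL-Analysis.Analysis"
begin

definition prof :: "real \<Rightarrow> real \<Rightarrow> real \<Rightarrow> real" where
  "prof R d r =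
     (if r \<le> R - d then 2 * r / R\<^sup>2
      else if r > R + d \<or> r < d - R then 0
      else 2 * r / (pi * R\<^sup>2) * arccos ((d\<^sup>2 + r\<^sup>2 - R\<^sup>2) / (2 * d * r)))"

definition prof_support :: "real \<Rightarrow> real \<Rightarrow> real set" where
  "prof_support R d = closure {r. 0 \<le> r \<and> prof R d r \<noteq> 0}"

end

theory Submission
  imports Defs
begin

definition cc :: "real \<Rightarrow> real \<Rightarrow> real \<Rightarrow> real" where
  "cc R d r = (d\<^sup>2 + r\<^sup>2 - R\<^sup>2) / (2 * d * r)"
definition Dl :: "real \<Rightarrow> real \<Rightarrow> real \<Rightarrow> real" where
  "Dl R d r = 4 * r\<^sup>2 * R\<^sup>2 - (r\<^sup>2 - d\<^sup>2 + R\<^sup>2)\<^sup>2"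

lemma Dl_factor: "Dl R d r = (R-r+d)*(R+r-d)*(r+d-R)*(r+d+R)"
  unfolding Dl_def by (simp add: power2_eq_square algebra_simps)

lemma int_facts:
  fixes R d r :: real
  assumes "R > 0" "d > 0" "r > 0" "r > d - R" "r > R - d" "r < d + R"
  shows "Dl R d r > 0" "-1 < cc R d r" "cc R d r < 1"
proof -
  show "Dl R d r > 0" unfolding Dl_factor using assms by (intro mult_pos_pos) auto
  have p: "2*d*r > 0" using assms by simp
  have "d\<^sup>2 + r\<^sup>2 - R\<^sup>2 < 2*d*r"
  proof -
    have "(R-r+d)*(R+r-d) > 0" using assms by (intro mult_pos_pos) auto
    then show ?thesis by (simp add: power2_eq_square algebra_simps)
  qed
  then show "cc R d r < 1" unfolding cc_def using p by (simp add: divide_less_eq)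
  have "- (2*d*r) < d\<^sup>2 + r\<^sup>2 - R\<^sup>2"
  proof -
    have "(r+d-R)*(r+d+R) > 0" using assms by (intro mult_pos_pos) auto
    then show ?thesis by (simp add: power2_eq_square algebra_simps)
  qed
  then show "-1 < cc R d r" unfolding cc_def using p by (simp add: less_divide_eq)
qed

lemma one_minus_cc:
  fixes R d r :: real
  assumes "d > 0" "r > 0"
  shows "1 - (cc R d r)\<^sup>2 = Dl R d r / (2*d*r)\<^sup>2"
  using assms unfolding cc_def Dl_def
  by (simp add: field_simps power2_eq_square)

lemma sqrt_cc:
  fixes R d r :: real
  assumes "d > 0" "r > 0"
  shows "sqrt (1 - (cc R d r)\<^sup>2) = sqrt (Dl R d r) / (2*d*r)"
  using assms by (simp add: one_minus_cc real_sqrt_divide)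

lemma deriv_cc:
  fixes R d r :: real
  assumes "d > 0" "r > 0"
  shows "(cc R d has_real_derivative (r\<^sup>2 - d\<^sup>2 + R\<^sup>2) / (2*d*r\<^sup>2)) (at r)"
proof -
  have e: "cc R d = (\<lambda>x. (d\<^sup>2 + x\<^sup>2 - R\<^sup>2) / (2 * d * x))" by (rule ext) (simp add: cc_def)
  show ?thesis unfolding e
    by (rule derivative_eq_intros refl | use assms in force)+
       (use assms in \<open>simp add: field_simps power2_eq_square\<close>)
qed

lemma deriv_arccos_cc:
  fixes R d r :: real
  assumes "R > 0" "d > 0" "r > 0" "r > d - R" "r > R - d" "r < d + R"
  shows "((\<lambda>x. arccos (cc R d x)) has_real_derivative - (r\<^sup>2 - d\<^sup>2 + R\<^sup>2) / (r * sqrt (Dl R d r))) (at r)"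
proof -
  note f = int_facts[OF assms]
  have "((\<lambda>x. arccos (cc R d x)) has_real_derivative
     inverse (- sqrt (1 - (cc R d r)\<^sup>2)) * ((r\<^sup>2 - d\<^sup>2 + R\<^sup>2) / (2*d*r\<^sup>2))) (at r)"
    by (rule DERIV_chain2[OF DERIV_arccos deriv_cc]) (use f assms in auto)
  moreover have "inverse (- sqrt (1 - (cc R d r)\<^sup>2)) * ((r\<^sup>2 - d\<^sup>2 + R\<^sup>2) / (2*d*r\<^sup>2))
      = - (r\<^sup>2 - d\<^sup>2 + R\<^sup>2) / (r * sqrt (Dl R d r))"
    unfolding sqrt_cc[OF assms(2,3)] using assms f by (simp add: field_simps power2_eq_square)
  ultimately show ?thesis by simp
qed

lemma deriv_g:
  fixes R d r :: real
  assumes "R > 0" "d > 0" "r > 0" "r > d - R" "r > R - d" "r < d + R"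
  shows "((\<lambda>x. x * arccos (cc R d x)) has_real_derivative
     arccos (cc R d r) - (r\<^sup>2 - d\<^sup>2 + R\<^sup>2) / sqrt (Dl R d r)) (at r)"
proof -
  have "((\<lambda>x. x * arccos (cc R d x)) has_real_derivative
     1 * arccos (cc R d r) + (- (r\<^sup>2 - d\<^sup>2 + R\<^sup>2) / (r * sqrt (Dl R d r))) * r) (at r)"
    by (rule DERIV_mult[OF DERIV_ident deriv_arccos_cc[OF assms]])
  moreover have "1 * arccos (cc R d r) + (- (r\<^sup>2 - d\<^sup>2 + R\<^sup>2) / (r * sqrt (Dl R d r))) * r
     = arccos (cc R d r) - (r\<^sup>2 - d\<^sup>2 + R\<^sup>2) / sqrt (Dl R d r)"
    using assms int_facts[OF assms] by (simp add: field_simps)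
  ultimately show ?thesis by simp
qed

lemma alg_G1:
  fixes q r R N :: real
  assumes "q > 0" "r > 0" "q\<^sup>2 = 4*r\<^sup>2*R\<^sup>2 - N\<^sup>2"
  shows "- N / (r*q) - (2*r*q - N*((8*r*R\<^sup>2 - 4*r*N)/(2*q)))/q\<^sup>2 = -(8*r^4*R\<^sup>2 - N^3)/(r*q\<^sup>2*q)"
proof -
  have "- N / (r*q) - (2*r*q - N*((8*r*R\<^sup>2 - 4*r*N)/(2*q)))/q\<^sup>2
     = (- N * q\<^sup>2 - 2*r\<^sup>2*q\<^sup>2 + r*N*(4*r*R\<^sup>2 - 2*r*N)) / (r*q\<^sup>2*q)"
    using assms(1,2) by (simp add: field_simps power2_eq_square)
  also have "- N * q\<^sup>2 - 2*r\<^sup>2*q\<^sup>2 + r*N*(4*r*R\<^sup>2 - 2*r*N) = -(8*r^4*R\<^sup>2 - N^3)"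
    unfolding assms(3) by (simp add: power2_eq_square power3_eq_cube power4_eq_xxxx algebra_simps)
  finally show ?thesis .
qed

lemma deriv_G1:
  fixes R d r :: real
  assumes "R > 0" "d > 0" "r > 0" "r > d - R" "r > R - d" "r < d + R"
  shows "((\<lambda>x. arccos (cc R d x) - (x\<^sup>2 - d\<^sup>2 + R\<^sup>2) / sqrt (Dl R d x)) has_real_derivative
     - (8 * r^4 * R\<^sup>2 - (r\<^sup>2 - d\<^sup>2 + R\<^sup>2)^3) / (r * Dl R d r * sqrt (Dl R d r))) (at r)"
proof -
  note f = int_facts[OF assms]
  have e: "Dl R d = (\<lambda>x. 4 * x\<^sup>2 * R\<^sup>2 - (x\<^sup>2 - d\<^sup>2 + R\<^sup>2)\<^sup>2)" by (rule ext) (simp add: Dl_def)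
  have h: "((\<lambda>x. (x\<^sup>2 - d\<^sup>2 + R\<^sup>2) / sqrt (Dl R d x)) has_real_derivative
     (2*r * sqrt (Dl R d r) - (r\<^sup>2 - d\<^sup>2 + R\<^sup>2) * ((8*r*R\<^sup>2 - 4*r*(r\<^sup>2 - d\<^sup>2 + R\<^sup>2)) / (2 * sqrt (Dl R d r)))) / (sqrt (Dl R d r))\<^sup>2) (at r)"
    unfolding e
    apply (rule derivative_eq_intros refl | use assms f[unfolded e] in force)+
    using f[unfolded e] by (simp add: field_simps power2_eq_square)
  have q: "sqrt (Dl R d r) > 0" "(sqrt (Dl R d r))\<^sup>2 = 4*r\<^sup>2*R\<^sup>2 - (r\<^sup>2 - d\<^sup>2 + R\<^sup>2)\<^sup>2"
    using f by (auto simp: Dl_def)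
  have "Dl R d r = (sqrt (Dl R d r))\<^sup>2" using f by simp
  then have eq: "- (r\<^sup>2 - d\<^sup>2 + R\<^sup>2) / (r * sqrt (Dl R d r)) - (2*r * sqrt (Dl R d r) - (r\<^sup>2 - d\<^sup>2 + R\<^sup>2) * ((8*r*R\<^sup>2 - 4*r*(r\<^sup>2 - d\<^sup>2 + R\<^sup>2)) / (2 * sqrt (Dl R d r)))) / (sqrt (Dl R d r))\<^sup>2
     = - (8 * r^4 * R\<^sup>2 - (r\<^sup>2 - d\<^sup>2 + R\<^sup>2)^3) / (r * Dl R d r * sqrt (Dl R d r))"
    using alg_G1[OF q(1) assms(3) q(2)] by simp
  show ?thesis using DERIV_diff[OF deriv_arccos_cc[OF assms] h] unfolding eq .
qed

lemma E_nonneg: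
  fixes r R N :: real
  assumes "N\<^sup>2 < 4*r\<^sup>2*R\<^sup>2" "N \<le> 2*r\<^sup>2"
  shows "N^3 \<le> 8*r^4*R\<^sup>2"
proof (cases "N \<le> 0")
  case True
  then have "N^3 \<le> 0" by (simp add: power_le_zero_eq)
  moreover have "0 \<le> 8*r^4*R\<^sup>2" by simp
  ultimately show ?thesis by linarith
next
  case False
  have "N^3 = N\<^sup>2 * N" by (simp add: power2_eq_square power3_eq_cube)
  also have "\<dots> \<le> (4*r\<^sup>2*R\<^sup>2) * (2*r\<^sup>2)"
    using assms False by (intro mult_mono) auto
  also have "\<dots> = 8*r^4*R\<^sup>2" by (simp add: power2_eq_square power4_eq_xxxx)
  finally show ?thesis .
qed

lemma concave_from_deriv2:
  fixes f f' f'' :: "real \<Rightarrow> real"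
  assumes cont: "continuous_on {a..b} f"
    and d1: "\<And>x. a < x \<Longrightarrow> x < b \<Longrightarrow> (f has_real_derivative f' x) (at x)"
    and d2: "\<And>x. a < x \<Longrightarrow> x < b \<Longrightarrow> (f' has_real_derivative f'' x) (at x)"
    and neg: "\<And>x. a < x \<Longrightarrow> x < b \<Longrightarrow> f'' x \<le> 0"
  shows "concave_on {a..b} f"
proof (rule concave_on_linorderI)
  show "convex {a..b}" by simp
next
  fix t x y :: real
  assume t: "t > 0" "t < 1"
  assume xy: "x \<in> {a..b}" "y \<in> {a..b}" "x < y"
  define z where "z = (1 - t) * x + t * y"
  have xz: "z > x" using xy t by (simp add: z_def algebra_simps)
  have "y - z = (1 - t) * (y - x)" by (simp add: z_def algebra_simps)
  also from xy t have "\<dots> > 0" by (intro mult_pos_pos) simp_all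
  finally have yz: "z < y" by simp
  have "\<exists>l w. x < w \<and> w < z \<and> DERIV f w :> l \<and> f z - f x = (z - x) * l"
  proof (rule MVT[OF xz])
    show "continuous_on {x..z} f" by (rule continuous_on_subset[OF cont]) (use xy yz in auto)
    fix w assume "x < w" "w < z"
    then have "a < w" "w < b" using xy yz by auto
    then show "f differentiable at w" unfolding real_differentiable_def by (blast intro: d1)
  qed
  then obtain l \<xi> where \<xi>: "x < \<xi>" "\<xi> < z" "DERIV f \<xi> :> l" "f z - f x = (z - x) * l" by blast
  have l: "l = f' \<xi>" using DERIV_unique[OF \<xi>(3) d1] \<xi> xy yz by auto
  have "\<exists>l w. z < w \<and> w < y \<and> DERIV f w :> l \<and> f y - f z = (y - z) * l"
  proof (rule MVT[OF yz])
    show "continuous_on {z..y} f" by (rule continuous_on_subset[OF cont]) (use xy xz in auto)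
    fix w assume "z < w" "w < y"
    then have "a < w" "w < b" using xy xz by auto
    then show "f differentiable at w" unfolding real_differentiable_def by (blast intro: d1)
  qed
  then obtain m \<eta> where \<eta>: "z < \<eta>" "\<eta> < y" "DERIV f \<eta> :> m" "f y - f z = (y - z) * m" by blast
  have m: "m = f' \<eta>" using DERIV_unique[OF \<eta>(3) d1] \<eta> xy xz by auto
  have "f' \<eta> \<le> f' \<xi>"
  proof (rule DERIV_nonpos_imp_nonincreasing[of \<xi> \<eta> f'])
    show "\<xi> \<le> \<eta>" using \<xi> \<eta> by simp
    fix w assume "\<xi> \<le> w" "w \<le> \<eta>"
    then have "a < w" "w < b" using \<xi> \<eta> xy by auto
    then show "\<exists>y. DERIV f' w :> y \<and> y \<le> 0" using d2 neg by blast
  qed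
  then have "(f y - f z) * (z - x) \<le> (f z - f x) * (y - z)"
  proof -
    have "(f y - f z) * (z - x) = ((y - z) * (z - x)) * m" using \<eta>(4) by simp
    also have "\<dots> \<le> ((y - z) * (z - x)) * l"
      using l m \<open>f' \<eta> \<le> f' \<xi>\<close> xz yz by (intro mult_left_mono) auto
    also have "\<dots> = (f z - f x) * (y - z)" using \<xi>(4) by simp
    finally show ?thesis .
  qed
  also have "z - x = t * (y - x)" by (simp add: z_def algebra_simps)
  also have "y - z = (1 - t) * (y - x)" by (simp add: z_def algebra_simps)
  finally have "(f y - f z) * t \<le> (f z - f x) * (1 - t)"
    using xy by simp
  then show "(1 - t) * f x + t * f y \<le> f ((1 - t) *\<^sub>R x + t *\<^sub>R y)"
    by (simp add: z_def algebra_simps)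
qed

lemma concave_on_cong':
  assumes "concave_on S f" "\<And>x. x \<in> S \<Longrightarrow> f x = g x"
  shows "concave_on S g"
  unfolding concave_on_iff
proof (intro conjI ballI allI impI)
  show cS: "convex S" using assms(1) by (rule concave_on_imp_convex)
  fix x y :: 'a and u v :: real
  assume xy: "x \<in> S" "y \<in> S" and uv: "0 \<le> u" "0 \<le> v" "u + v = 1"
  have "u *\<^sub>R x + v *\<^sub>R y \<in> S" using convexD[OF cS xy uv] .
  then show "u * g x + v * g y \<le> g (u *\<^sub>R x + v *\<^sub>R y)"
    using assms(1) xy uv assms(2)[symmetric] unfolding concave_on_iff by metis
qed

lemma cc_range:
  fixes R d r :: real
  assumes "R > 0" "d > 0" "r \<ge> 0" "r \<ge> d - R" "r \<ge> R - d" "r \<le> d + R"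
  shows "-1 \<le> cc R d r \<and> cc R d r \<le> 1"
proof (cases "r = 0")
  case True then show ?thesis by (simp add: cc_def)
next
  case False
  then have p: "2*d*r > 0" using assms by simp
  have "d\<^sup>2 + r\<^sup>2 - R\<^sup>2 \<le> 2*d*r"
  proof -
    have "(R-r+d)*(R+r-d) \<ge> 0" using assms by (intro mult_nonneg_nonneg) auto
    then show ?thesis by (simp add: power2_eq_square algebra_simps)
  qed
  then have 1: "cc R d r \<le> 1" unfolding cc_def using p by (simp add: divide_le_eq)
  have "- (2*d*r) \<le> d\<^sup>2 + r\<^sup>2 - R\<^sup>2"
  proof -
    have "(r+d-R)*(r+d+R) \<ge> 0" using assms by (intro mult_nonneg_nonneg) auto
    then show ?thesis by (simp add: power2_eq_square algebra_simps)
  qed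
  then have "-1 \<le> cc R d r" unfolding cc_def using p by (simp add: le_divide_eq)
  with 1 show ?thesis by simp
qed

lemma g_concave:
  fixes R d lo :: real
  assumes R: "R > 0" and d: "d > 0" and lo: "lo \<ge> 0" "lo \<ge> d - R" "lo \<ge> R - d" "R\<^sup>2 - d\<^sup>2 \<le> lo\<^sup>2" "lo < d + R"
  shows "concave_on {lo..d+R} (\<lambda>r. r * arccos (cc R d r))"
proof (rule concave_from_deriv2)
  fix r assume r: "lo < r" "r < d + R"
  have a: "R > 0" "d > 0" "r > 0" "r > d - R" "r > R - d" "r < d + R" using r lo R d by auto
  show "((\<lambda>x. x * arccos (cc R d x)) has_real_derivative
     arccos (cc R d r) - (r\<^sup>2 - d\<^sup>2 + R\<^sup>2) / sqrt (Dl R d r)) (at r)"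
    by (rule deriv_g[OF a])
  show "((\<lambda>x. arccos (cc R d x) - (x\<^sup>2 - d\<^sup>2 + R\<^sup>2) / sqrt (Dl R d x)) has_real_derivative
     - (8 * r^4 * R\<^sup>2 - (r\<^sup>2 - d\<^sup>2 + R\<^sup>2)^3) / (r * Dl R d r * sqrt (Dl R d r))) (at r)"
    by (rule deriv_G1[OF a])
  have D: "Dl R d r > 0" using int_facts[OF a] by simp
  have "lo\<^sup>2 \<le> r\<^sup>2" using lo r by (intro power_mono) auto
  then have "(r\<^sup>2 - d\<^sup>2 + R\<^sup>2) \<le> 2 * r\<^sup>2" using lo by linarith
  moreover have "(r\<^sup>2 - d\<^sup>2 + R\<^sup>2)\<^sup>2 < 4 * r\<^sup>2 * R\<^sup>2" using D by (simp add: Dl_def)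
  ultimately have "(r\<^sup>2 - d\<^sup>2 + R\<^sup>2)^3 \<le> 8 * r^4 * R\<^sup>2" by (rule E_nonneg[rotated])
  then show "- (8 * r^4 * R\<^sup>2 - (r\<^sup>2 - d\<^sup>2 + R\<^sup>2)^3) / (r * Dl R d r * sqrt (Dl R d r)) \<le> 0"
    using D a by (intro divide_nonpos_nonneg) auto
next
  show "continuous_on {lo..d+R} (\<lambda>r. r * arccos (cc R d r))"
  proof (cases "lo = 0")
    case False
    then have pos: "\<And>r. r \<in> {lo..d+R} \<Longrightarrow> r > 0" using lo by auto
    have e: "cc R d = (\<lambda>x. (d\<^sup>2 + x\<^sup>2 - R\<^sup>2) / (2 * d * x))" by (rule ext) (simp add: cc_def)
    have "continuous_on {lo..d+R} (cc R d)" unfolding e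
      by (intro continuous_intros) (use pos d in force)
    then show ?thesis
      by (intro continuous_intros) (use cc_range R d lo in \<open>auto\<close>)
  next
    case True
    then have dR: "d = R" using lo by auto
    have e: "\<And>r. cc R d r = r / (2 * R)" unfolding cc_def dR using R
      by (simp add: power2_eq_square field_simps)
    show ?thesis unfolding e
      by (intro continuous_intros) (use R dR True in \<open>auto simp: field_simps\<close>)
  qed
qed

lemma prof_eq:
  fixes R d lo r :: real
  assumes R: "R > 0" and d: "d > 0" and lo: "lo \<ge> 0" "lo \<ge> d - R" "lo \<ge> R - d" "R\<^sup>2 - d\<^sup>2 \<le> lo\<^sup>2"
    and r: "lo \<le> r" "r \<le> d + R"
  shows "prof R d r = 2 / (pi * R\<^sup>2) * (r * arccos (cc R d r))"
proof (cases "r \<le> R - d")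
  case True
  then have rlo: "r = R - d" "lo = R - d" using r lo by auto
  then have "(R - d)\<^sup>2 \<ge> R\<^sup>2 - d\<^sup>2" using lo by simp
  then have "2 * d * d \<ge> 2 * R * d" by (simp add: power2_eq_square algebra_simps)
  then have "d \<ge> R" using d by simp
  then have "r = 0" using rlo lo by auto
  then show ?thesis by (simp add: prof_def)
next
  case False
  then show ?thesis using r lo by (simp add: prof_def cc_def)
qed

lemma prof_concave:
  fixes R d lo :: real
  assumes R: "R > 0" and d: "d > 0" and lo: "lo \<ge> 0" "lo \<ge> d - R" "lo \<ge> R - d" "R\<^sup>2 - d\<^sup>2 \<le> lo\<^sup>2" "lo < d + R"
  shows "concave_on {lo..d+R} (prof R d)"
proof (rule concave_on_cong')
  show "concave_on {lo..d+R} (\<lambda>r. 2 / (pi * R\<^sup>2) * (r * arccos (cc R d r)))"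
    by (rule concave_on_cmul) (use g_concave[OF assms] in auto)
  fix r assume "r \<in> {lo..d+R}"
  then show "2 / (pi * R\<^sup>2) * (r * arccos (cc R d r)) = prof R d r"
    using prof_eq[OF R d lo(1-4)] by auto
qed

lemma concave_single: "concave_on {a..a::real} f"
  by (auto simp: concave_on_iff simp flip: distrib_right)

lemma S_sub:
  fixes R d :: real
  assumes R: "R > 0" and d: "d \<ge> 0"
  shows "{r. 0 \<le> r \<and> prof R d r \<noteq> 0} \<subseteq> {max 0 (d - R)..d + R}"
proof
  fix r assume "r \<in> {r. 0 \<le> r \<and> prof R d r \<noteq> 0}"
  then have r: "0 \<le> r" "prof R d r \<noteq> 0" by auto
  have "r \<ge> d - R"
  proof (rule ccontr)
    assume "\<not> r \<ge> d - R"
    then have "\<not> r \<le> R - d" using r(1) by linarith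
    then have "prof R d r = 0" using \<open>\<not> r \<ge> d - R\<close> by (simp add: prof_def)
    with r show False by simp
  qed
  moreover have "r \<le> d + R"
  proof (rule ccontr)
    assume a: "\<not> r \<le> d + R"
    then have "\<not> r \<le> R - d" using d by linarith
    then have "prof R d r = 0" using a by (simp add: prof_def)
    with r show False by simp
  qed
  ultimately show "r \<in> {max 0 (d - R)..d + R}" using r by auto
qed

lemma S_sup:
  fixes R d :: real
  assumes R: "R > 0" and d: "d \<ge> 0"
  shows "{max 0 (d - R)<..<d + R} \<subseteq> {r. 0 \<le> r \<and> prof R d r \<noteq> 0}"
proof
  fix r assume "r \<in> {max 0 (d - R)<..<d + R}"
  then have r: "r > 0" "r > d - R" "r < d + R" by auto
  have "prof R d r \<noteq> 0"
  proof (cases "r \<le> R - d")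
    case True
    then show ?thesis using r R by (simp add: prof_def)
  next
    case False
    then have dp: "d > 0" using r d by (cases "d = 0") auto
    have a: "R > 0" "d > 0" "r > 0" "r > d - R" "r > R - d" "r < d + R" using False r R dp by auto
    note f = int_facts[OF a]
    have "arccos (cc R d r) \<noteq> 0" using f arccos_eq_0_iff[of "cc R d r"] by auto
    then show ?thesis using False r R by (simp add: prof_def cc_def)
  qed
  then show "r \<in> {r. 0 \<le> r \<and> prof R d r \<noteq> 0}" using r by auto
qed

lemma support_eq:
  fixes R d :: real
  assumes R: "R > 0" and d: "d \<ge> 0"
  shows "prof_support R d = {max 0 (d - R)..d + R}"
proof
  show "prof_support R d \<subseteq> {max 0 (d - R)..d + R}"
    unfolding prof_support_def by (rule closure_minimal[OF S_sub[OF assms]]) simp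
  have "max 0 (d - R) < d + R" using R d by auto
  then have "{max 0 (d - R)..d + R} = closure {max 0 (d - R)<..<d + R}" by simp
  also have "\<dots> \<subseteq> prof_support R d"
    unfolding prof_support_def by (rule closure_mono[OF S_sup[OF assms]])
  finally show "{max 0 (d - R)..d + R} \<subseteq> prof_support R d" .
qed

theorem propositionB1:
  fixes R :: real
  assumes "R > 0"
  shows "(\<forall>d::real. d \<ge> 0 \<longrightarrow> concave_on (prof_support R d \<inter> {R..}) (prof R d))
       \<and> (\<forall>d::real. d \<ge> R \<longrightarrow>
            prof_support R d = {d - R..d + R} \<and> concave_on {d - R..d + R} (prof R d))"
proof (intro conjI allI impI)
  fix d :: real assume d: "d \<ge> 0"
  have e: "prof_support R d \<inter> {R..} = {max R (d - R)..d + R}"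
    unfolding support_eq[OF assms d] using assms by auto
  show "concave_on (prof_support R d \<inter> {R..}) (prof R d)"
  proof (cases "d = 0")
    case True
    then show ?thesis unfolding e using assms concave_single by simp
  next
    case False
    then have dp: "d > 0" using d by simp
    have "R\<^sup>2 \<le> (max R (d - R))\<^sup>2" using assms by (intro power_mono) auto
    then have "R\<^sup>2 - d\<^sup>2 \<le> (max R (d - R))\<^sup>2" using zero_le_power2[of d] by linarith
    then show ?thesis unfolding e
      by (intro prof_concave[OF assms dp]) (use assms dp in auto)
  qed
next
  fix d :: real assume d: "d \<ge> R"
  show "prof_support R d = {d - R..d + R}"
    using support_eq[of R d] assms d by simp
  have "R\<^sup>2 - d\<^sup>2 \<le> 0" using d assms by (simp add: power_mono)
  also have "0 \<le> (d - R)\<^sup>2" by simp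
  finally show "concave_on {d - R..d + R} (prof R d)"
    by (intro prof_concave) (use assms d in auto)
qed

end
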